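(* Let $\mathcal{H}$ be a real Hilbert space, let $A\colon \mathcal{H}\rightrightarrows\mathcal{H}$ be maximally monotone, let $B\colon \mathcal{H}\to\mathcal{H}$ be monotone and $L$-Lipschitz, and suppose that $(A+B)^{-1}(0)\neq\varnothing$. Choose $\lambda\in \left(0,\frac{1}{2L}\right)$. Given $x_0,x_{-1}\in\mathcal{H}$, define the sequence $(x_k)$ by $$x_{k+1} = J_{\lambda A}\bigl(x_k - 2\lambda B(x_k) +\lambda B(x_{k-1})\bigr) \quad\forall k\in\mathbb{N}.$$ Then $(x_k)$ converges weakly to a point contained in $(A+B)^{-1}(0)$.
   Context: $J_{\lambda A}:=(I+\lambda A)^{-1}$ denotes the resolvent. *)

theory Defs
  imports "HOL-Analysis.Analysis"
begin

text \<open>Set-valued operators on a real Hilbert space are modelled as functions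
  A :: 'a => 'a set (A x is the image set; the graph is {(x,u). u \<in> A x}).\<close>

definition monotone_op :: "('a::real_inner \<Rightarrow> 'a set) \<Rightarrow> bool" where
  "monotone_op A \<longleftrightarrow> (\<forall>x y u v. u \<in> A x \<longrightarrow> v \<in> A y \<longrightarrow> 0 \<le> inner (x - y) (u - v))"

definition maximally_monotone :: "('a::real_inner \<Rightarrow> 'a set) \<Rightarrow> bool" where
  "maximally_monotone A \<longleftrightarrow> monotone_op A \<and>
     (\<forall>A'. monotone_op A' \<and> (\<forall>x. A x \<subseteq> A' x) \<longrightarrow> A' = A)"

definition monotone_fun :: "('a::real_inner \<Rightarrow> 'a) \<Rightarrow> bool" where
  "monotone_fun B \<longleftrightarrow> (\<forall>x y. 0 \<le> inner (x - y) (B x - B y))"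

text \<open>Resolvent J_{lam A} = (I + lam A)^{-1}, as a set-valued map:
  p \<in> J y iff y \<in> p + lam A p.\<close>
definition resolvent :: "real \<Rightarrow> ('a::real_inner \<Rightarrow> 'a set) \<Rightarrow> 'a \<Rightarrow> 'a set" where
  "resolvent lam A y = {p. \<exists>a \<in> A p. y = p + lam *\<^sub>R a}"

definition zeros_sum :: "('a::real_inner \<Rightarrow> 'a set) \<Rightarrow> ('a \<Rightarrow> 'a) \<Rightarrow> 'a set" where
  "zeros_sum A B = {z. \<exists>a \<in> A z. a + B z = 0}"

definition weakly_converges :: "(nat \<Rightarrow> 'a::real_inner) \<Rightarrow> 'a \<Rightarrow> bool" where
  "weakly_converges x p \<longleftrightarrow> (\<forall>y. (\<lambda>k. inner (x k) y) \<longlonglongrightarrow> inner p y)"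

end

theory Submission
  imports Defs "HOL-Library.Diagonal_Subsequence"
begin


lemma quad_zero:
  fixes a b :: real
  assumes "\<forall>t. 0 \<le> t*a + t^2*b"
  shows "a = 0"
proof (rule ccontr)
  assume "a \<noteq> 0"
  define s where "s = 1 / (\<bar>b\<bar> + 1)"
  have s: "s > 0" "s * b < 1" unfolding s_def by (auto simp: field_simps)
  have "0 \<le> (- a * s) * a + (- a * s)^2 * b" using assms by blast
  also have "\<dots> = a^2 * s * (s*b - 1)" by (simp add: power2_eq_square algebra_simps)
  also have "\<dots> < 0" using s \<open>a \<noteq> 0\<close> by (simp add: mult_pos_neg)
  finally show False by simp
qed

lemma aux_ineq: "(x::real)/4 \<le> (a+b)/2 - c \<Longrightarrow> (d::real) \<le> c \<Longrightarrow> a < d + (i::real) \<Longrightarrow> b < d + (j::real) \<Longrightarrow> x < 2 * i + 2 * j"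
  by (simp add: field_simps)

lemma min_exists:
  fixes h :: "'a::{real_inner,complete_space} \<Rightarrow> real"
  assumes C: "closed C" "C \<noteq> {}"
    and mid: "\<And>z w. z\<in>C \<Longrightarrow> w\<in>C \<Longrightarrow> (1/2) *\<^sub>R (z+w) \<in> C \<and>
               h ((1/2) *\<^sub>R (z+w)) \<le> (h z + h w)/2 - (norm (z-w))^2/4"
    and lb: "\<And>z. z \<in> C \<Longrightarrow> c \<le> h z"
    and cont: "\<And>s l. (\<forall>n. s n \<in> C) \<Longrightarrow> s \<longlonglongrightarrow> l \<Longrightarrow> l \<in> C \<Longrightarrow> (\<lambda>n. h (s n)) \<longlonglongrightarrow> h l"
  shows "\<exists>p\<in>C. \<forall>z\<in>C. h p \<le> h z"
proof -
  define ep :: "nat \<Rightarrow> real" where "ep n = inverse (real (Suc n))" for n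
  have ep_mono: "ep m \<le> ep M" if "M \<le> m" for m M unfolding ep_def using that by (auto simp: field_simps)
  have ep_lim: "ep \<longlonglongrightarrow> 0" unfolding ep_def by (rule LIMSEQ_inverse_real_of_nat)
  define d where "d = Inf (h ` C)"
  have bdd: "bdd_below (h ` C)" using lb unfolding bdd_below_def by auto
  have dle: "d \<le> h z" if "z \<in> C" for z unfolding d_def using bdd that by (simp add: cInf_lower)
  have "\<exists>z\<in>C. h z < d + ep n" for n
  proof -
    have "Inf (h ` C) < d + ep n" unfolding d_def by (simp add: ep_def)
    then show ?thesis using cInf_less_iff[of "h ` C"] bdd C(2) by auto
  qed
  then obtain s where s: "\<And>n. s n \<in> C" "\<And>n. h (s n) < d + ep n" by metis
  have dist: "(norm (s m - s n))^2 < 2 * ep m + 2 * ep n" for m n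
  proof -
    have "(norm (s m - s n))^2/4 \<le> (h (s m) + h (s n))/2 - h ((1/2) *\<^sub>R (s m + s n))"
      using mid[OF s(1)[of m] s(1)[of n]] by linarith
    moreover have "d \<le> h ((1/2) *\<^sub>R (s m + s n))" using mid[OF s(1)[of m] s(1)[of n]] dle by blast
    ultimately show ?thesis using s(2)[of m] s(2)[of n] by (rule aux_ineq)
  qed
  have "Cauchy s"
  proof (rule CauchyI)
    fix e :: real assume e: "0 < e"
    obtain M :: nat where M: "4 / e^2 < real M" using reals_Archimedean2 by blast
    have "norm (s m - s n) < e" if "m \<ge> M" "n \<ge> M" for m n
    proof -
      have "ep m \<le> ep M" "ep n \<le> ep M"
        using that ep_mono by auto
      then have "(norm (s m - s n))^2 < 4 * ep M" using dist[of m n] by linarith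
      also have "\<dots> < e^2" using M e by (simp add: ep_def field_simps) (smt (verit) zero_less_power)
      finally show ?thesis using e by (smt (verit) power_mono norm_ge_zero)
    qed
    then show "\<exists>M. \<forall>m\<ge>M. \<forall>n\<ge>M. norm (s m - s n) < e" by blast
  qed
  then obtain l where l: "s \<longlonglongrightarrow> l" using Cauchy_convergent_iff convergent_def by blast
  have lC: "l \<in> C" using closed_sequentially[OF C(1) s(1) l] .
  have hl: "(\<lambda>n. h (s n)) \<longlonglongrightarrow> h l" using cont[OF _ l lC] s(1) by blast
  have "(\<lambda>n. d + ep n) \<longlonglongrightarrow> d + 0"
    by (intro tendsto_intros ep_lim)
  then have "h l \<le> d" using hl s(2) by (intro LIMSEQ_le[OF hl]) (auto intro: less_imp_le)
  then show ?thesis using lC dle by force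
qed



lemma half_sum_norm:
  fixes a b :: "'a::real_inner"
  shows "(norm ((1/2) *\<^sub>R (a + b)))^2 = ((norm a)^2 + (norm b)^2)/2 - (norm (b - a))^2/4"
  unfolding power2_norm_eq_inner by (simp add: inner_add inner_diff algebra_simps inner_commute) (simp add: field_simps)

lemma norm_diff_scale:
  fixes d w :: "'a::real_inner"
  shows "(norm (d - t *\<^sub>R w))^2 = (norm d)^2 + t * (- 2 * inner d w) + t^2 * (norm w)^2"
  unfolding power2_norm_eq_inner by (simp add: inner_add inner_diff algebra_simps inner_commute power2_eq_square)

lemma norm_add_scale:
  fixes d w :: "'a::real_inner"
  shows "(norm (d + t *\<^sub>R w))^2 = (norm d)^2 + t * (2 * inner d w) + t^2 * (norm w)^2"
  unfolding power2_norm_eq_inner by (simp add: inner_add inner_diff algebra_simps inner_commute power2_eq_square)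

lemma proj_subspace:
  fixes M :: "'a::{real_inner,complete_space} set"
  assumes "closed M" "subspace M"
  shows "\<exists>q\<in>M. \<forall>w\<in>M. inner (y - q) w = 0"
proof -
  have ne: "M \<noteq> {}" using assms(2) subspace_0 by blast
  have "\<exists>q\<in>M. \<forall>z\<in>M. (norm (y - q))^2 \<le> (norm (y - z))^2"
  proof (rule min_exists[OF assms(1) ne, where c = 0])
    fix z w assume zw: "z \<in> M" "w \<in> M"
    show "(1/2) *\<^sub>R (z+w) \<in> M \<and> (norm (y - (1/2) *\<^sub>R (z+w)))^2 \<le> ((norm (y - z))^2 + (norm (y - w))^2)/2 - (norm (z - w))^2/4"
    proof
      show "(1/2) *\<^sub>R (z+w) \<in> M" using assms(2) zw by (simp add: subspace_add subspace_scale)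
      have e1: "y - (1/2) *\<^sub>R (z+w) = (1/2) *\<^sub>R ((y - z) + (y - w))"
        by (simp add: algebra_simps) (metis scaleR_add_left field_sum_of_halves scaleR_one)
      have e2: "(y - w) - (y - z) = z - w" by simp
      show "(norm (y - (1/2) *\<^sub>R (z+w)))^2 \<le> ((norm (y - z))^2 + (norm (y - w))^2)/2 - (norm (z - w))^2/4"
        unfolding e1 half_sum_norm e2 by simp
    qed
  next
    fix s :: "nat \<Rightarrow> 'a" and l assume "s \<longlonglongrightarrow> l"
    then show "(\<lambda>n. (norm (y - s n))^2) \<longlonglongrightarrow> (norm (y - l))^2" by (intro tendsto_intros)
  qed simp
  then obtain q where q: "q \<in> M" "\<And>z. z\<in>M \<Longrightarrow> (norm (y - q))^2 \<le> (norm (y - z))^2" by blast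
  have "inner (y - q) w = 0" if w: "w \<in> M" for w
  proof -
    have "\<forall>t. 0 \<le> t * (- 2 * inner (y - q) w) + t^2 * (norm w)^2"
    proof
      fix t :: real
      have "q + t *\<^sub>R w \<in> M" using assms(2) q(1) w by (simp add: subspace_add subspace_scale)
      then have "(norm (y - q))^2 \<le> (norm ((y - q) - t *\<^sub>R w))^2" using q(2) by (simp add: algebra_simps)
      then show "0 \<le> t * (- 2 * inner (y - q) w) + t^2 * (norm w)^2" unfolding norm_diff_scale by simp
    qed
    then show ?thesis using quad_zero by fastforce
  qed
  then show ?thesis using q(1) by blast
qed

lemma bounded_real_subseq:
  fixes g :: "nat \<Rightarrow> real"
  assumes "\<And>n. \<bar>g n\<bar> \<le> K"
  shows "\<exists>r. strict_mono r \<and> convergent (g \<circ> r)"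
proof -
  obtain r where r: "strict_mono r" "monoseq (\<lambda>n. g (r n))" using seq_monosub by blast
  have "Bseq (\<lambda>n. g (r n))" using assms by (intro BseqI'[where K = K]) simp
  then have "convergent (\<lambda>n. g (r n))" using r(2) Bseq_monoseq_convergent by blast
  then show ?thesis using r(1) by (auto simp: o_def)
qed



lemma abs3: "\<bar>a\<bar> < e/3 \<Longrightarrow> \<bar>b\<bar> \<le> d \<Longrightarrow> \<bar>c\<bar> \<le> d \<Longrightarrow> d \<le> e/3 \<Longrightarrow> \<bar>a + b - c\<bar> < (e::real)"
  by linarith

lemma weak_compact:
  fixes X :: "nat \<Rightarrow> 'a::{real_inner,complete_space}"
  assumes bnd: "\<And>n. norm (X n) \<le> K"
  shows "\<exists>r p. strict_mono r \<and> weakly_converges (X \<circ> r) p"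
proof -
  have K0: "0 \<le> K" using bnd[of 0] norm_ge_zero[of "X 0"] by linarith
  have ip: "\<bar>inner (X i) (X m)\<bar> \<le> K * K" for i m
    using Cauchy_Schwarz_ineq2[of "X i" "X m"] mult_mono[OF bnd[of i] bnd[of m] K0 norm_ge_zero] by linarith
  interpret S: subseqs "\<lambda>m s. convergent (\<lambda>j. inner (X (s j)) (X m))"
  proof
    fix m and s :: "nat \<Rightarrow> nat" assume "strict_mono s"
    obtain r' where "strict_mono r'" "convergent ((\<lambda>j. inner (X (s j)) (X m)) \<circ> r')"
      using bounded_real_subseq[of "\<lambda>j. inner (X (s j)) (X m)", OF ip] by blast
    then show "\<exists>r'. strict_mono r' \<and> convergent (\<lambda>j. inner (X ((s \<circ> r') j)) (X m))"
      by (auto simp: o_def)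
  qed
  define r where "r = S.diagseq"
  have r: "strict_mono r" unfolding r_def by (rule S.subseq_diagseq)
  define xs where "xs j = X (r j)" for j
  have xsb: "norm (xs j) \<le> K" for j unfolding xs_def by (rule bnd)
  have conv: "convergent (\<lambda>j. inner (xs j) (X m))" for m
  proof -
    have "convergent (\<lambda>j. inner (X ((S.diagseq \<circ> (+) (Suc m)) j)) (X m))"
    proof (rule S.diagseq_holds)
      fix r :: "nat \<Rightarrow> nat" and s n
      assume "strict_mono r" "convergent (\<lambda>j. inner (X (s j)) (X n))"
      then show "convergent (\<lambda>j. inner (X ((s \<circ> r) j)) (X n))"
        using convergent_subseq_convergent[of "\<lambda>j. inner (X (s j)) (X n)" r] by (simp add: o_def)
    qed
    then obtain l where "(\<lambda>j. inner (X (S.diagseq (j + Suc m))) (X m)) \<longlonglongrightarrow> l"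
      by (auto simp: convergent_def o_def add.commute)
    then have "(\<lambda>j. inner (xs j) (X m)) \<longlonglongrightarrow> l" unfolding xs_def r_def by (rule LIMSEQ_offset)
    then show ?thesis by (auto simp: convergent_def)
  qed
  define W where "W = {w. convergent (\<lambda>j. inner (xs j) w)}"
  define f where "f w = lim (\<lambda>j. inner (xs j) w)" for w
  have fW: "(\<lambda>j. inner (xs j) w) \<longlonglongrightarrow> f w" if "w \<in> W" for w
    using that unfolding W_def f_def by (simp add: convergent_LIMSEQ_iff)
  have inW: "w \<in> W" if "(\<lambda>j. inner (xs j) w) \<longlonglongrightarrow> c" for w c
    using that unfolding W_def by (auto simp: convergent_def)
  have Xm: "X m \<in> W" for m using conv unfolding W_def by simp
  have xsW: "xs j \<in> W" for j using Xm unfolding xs_def by simp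
  have f_add: "z + w \<in> W \<and> f (z + w) = f z + f w" if "z \<in> W" "w \<in> W" for z w
  proof -
    have "(\<lambda>j. inner (xs j) (z + w)) \<longlonglongrightarrow> f z + f w"
      unfolding inner_add_right by (intro tendsto_intros fW that)
    then show ?thesis using inW fW limI by (metis LIMSEQ_unique)
  qed
  have f_scale: "c *\<^sub>R z \<in> W \<and> f (c *\<^sub>R z) = c * f z" if "z \<in> W" for z c
  proof -
    have "(\<lambda>j. inner (xs j) (c *\<^sub>R z)) \<longlonglongrightarrow> c * f z"
      unfolding inner_scaleR_right by (intro tendsto_intros fW that)
    then show ?thesis using inW fW by (metis LIMSEQ_unique)
  qed
  have f_diff: "z - w \<in> W \<and> f (z - w) = f z - f w" if "z \<in> W" "w \<in> W" for z w
  proof -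
    have "(\<lambda>j. inner (xs j) (z - w)) \<longlonglongrightarrow> f z - f w"
      unfolding inner_diff_right by (intro tendsto_intros fW that)
    then show ?thesis using inW fW by (metis LIMSEQ_unique)
  qed
  have f_bound: "\<bar>f w\<bar> \<le> K * norm w" if "w \<in> W" for w
  proof -
    have "(\<lambda>j. \<bar>inner (xs j) w\<bar>) \<longlonglongrightarrow> \<bar>f w\<bar>" by (intro tendsto_intros fW that)
    moreover have "\<bar>inner (xs j) w\<bar> \<le> K * norm w" for j
      using Cauchy_Schwarz_ineq2[of "xs j" w] mult_right_mono[OF xsb[of j] norm_ge_zero[of w]] by linarith
    ultimately show ?thesis by (intro LIMSEQ_le_const2) auto
  qed
  have subW: "subspace W"
  proof (rule subspaceI)
    show "0 \<in> W" by (rule inW[where c = 0]) simp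
  qed (use f_add f_scale in auto)
  have closedW: "closed W" unfolding closed_sequential_limits
  proof (intro allI impI, elim conjE)
    fix s l assume s: "\<forall>n. s n \<in> W" and sl: "s \<longlonglongrightarrow> l"
    have "Cauchy (\<lambda>j. inner (xs j) l)"
    proof (rule CauchyI)
      fix e :: real assume e: "0 < e"
      have "\<forall>\<^sub>F n in sequentially. dist (s n) l < e / (3 * (K + 1))"
        using sl e K0 by (auto simp: tendsto_iff)
      then obtain n where n: "norm (s n - l) < e / (3 * (K + 1))"
        by (auto simp: dist_norm eventually_sequentially)
      have "Cauchy (\<lambda>j. inner (xs j) (s n))" using fW[OF s[rule_format, of n]]
        by (auto simp: Cauchy_convergent_iff convergent_def)
      then obtain M where M: "\<And>i j. i \<ge> M \<Longrightarrow> j \<ge> M \<Longrightarrow> norm (inner (xs i) (s n) - inner (xs j) (s n)) < e/3"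
        using e by (metis CauchyD divide_pos_pos zero_less_numeral)
      have bd: "\<bar>inner (xs i) (l - s n)\<bar> \<le> K * (e / (3 * (K + 1)))" for i
      proof -
        have "\<bar>inner (xs i) (l - s n)\<bar> \<le> norm (xs i) * norm (l - s n)" by (rule Cauchy_Schwarz_ineq2)
        also have "\<dots> \<le> K * (e / (3 * (K + 1)))"
          using n xsb[of i] K0 by (intro mult_mono) (auto simp: norm_minus_commute)
        finally show ?thesis .
      qed
      have Kle: "K * (e / (3 * (K + 1))) \<le> e / 3" using K0 e by (simp add: field_simps)
      have "norm (inner (xs i) l - inner (xs j) l) < e" if "i \<ge> M" "j \<ge> M" for i j
      proof -
        have "inner (xs i) l - inner (xs j) l = (inner (xs i) (s n) - inner (xs j) (s n))
               + inner (xs i) (l - s n) - inner (xs j) (l - s n)" by (simp add: inner_diff_right)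
        then show ?thesis unfolding real_norm_def using M[OF that] bd[of i] bd[of j] Kle
          by (simp only: real_norm_def)
      qed
      then show "\<exists>M. \<forall>m\<ge>M. \<forall>n\<ge>M. norm (inner (xs m) l - inner (xs n) l) < e" by blast
    qed
    then show "l \<in> W" unfolding W_def by (simp add: Cauchy_convergent_iff)
  qed
  define h where "h z = (norm z)^2 - 2 * f z" for z
  have "\<exists>p\<in>W. \<forall>z\<in>W. h p \<le> h z"
  proof (rule min_exists[OF closedW, where c = "- (K^2)"])
    show "W \<noteq> {}" using Xm by blast
  next
    fix z w assume zw: "z \<in> W" "w \<in> W"
    have m: "(1/2) *\<^sub>R (z+w) \<in> W" "f ((1/2) *\<^sub>R (z+w)) = (f z + f w)/2"
      using f_add[OF zw] f_scale[of "z+w" "1/2"] by auto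
    show "(1/2) *\<^sub>R (z+w) \<in> W \<and> h ((1/2) *\<^sub>R (z+w)) \<le> (h z + h w)/2 - (norm (z - w))^2/4"
      using m unfolding h_def half_sum_norm by (simp add: norm_minus_commute field_simps)
  next
    fix z assume z: "z \<in> W"
    have "f z \<le> K * norm z" using f_bound[OF z] by linarith
    moreover have "0 \<le> (norm z - K)^2" by simp
    ultimately show "- (K^2) \<le> h z" unfolding h_def by (simp add: power2_eq_square algebra_simps)
  next
    fix s :: "nat \<Rightarrow> 'a" and l assume s: "\<forall>n. s n \<in> W" and sl: "s \<longlonglongrightarrow> l" and l: "l \<in> W"
    have "(\<lambda>n. f (s n) - f l) \<longlonglongrightarrow> 0"
    proof (rule Lim_null_comparison)
      show "\<forall>\<^sub>F n in sequentially. norm (f (s n) - f l) \<le> K * norm (s n - l)"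
        using f_diff f_bound s l by (auto intro!: always_eventually) (metis f_bound f_diff)
      have "(\<lambda>n. K * norm (s n - l)) \<longlonglongrightarrow> K * norm (l - l)" by (intro tendsto_intros sl)
      then show "(\<lambda>n. K * norm (s n - l)) \<longlonglongrightarrow> 0" by simp
    qed
    then have "(\<lambda>n. f (s n)) \<longlonglongrightarrow> f l" by (rule LIM_zero_cancel)
    then show "(\<lambda>n. h (s n)) \<longlonglongrightarrow> h l" unfolding h_def by (intro tendsto_intros sl)
  qed
  then obtain p where p: "p \<in> W" "\<And>z. z \<in> W \<Longrightarrow> h p \<le> h z" by blast
  have fo: "f w = inner p w" if w: "w \<in> W" for w
  proof -
    have "\<forall>t. 0 \<le> t * (2 * inner p w - 2 * f w) + t^2 * (norm w)^2"
    proof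
      fix t :: real
      have pw: "p + t *\<^sub>R w \<in> W" "f (p + t *\<^sub>R w) = f p + t * f w"
        using f_add[OF p(1), of "t *\<^sub>R w"] f_scale[OF w, of t] by auto
      have "h p \<le> h (p + t *\<^sub>R w)" using p(2) pw(1) by blast
      then show "0 \<le> t * (2 * inner p w - 2 * f w) + t^2 * (norm w)^2"
        unfolding h_def norm_add_scale pw(2) by (simp add: algebra_simps)
    qed
    then show ?thesis using quad_zero by fastforce
  qed
  have "weakly_converges (X \<circ> r) p" unfolding weakly_converges_def
  proof
    fix y
    obtain q where q: "q \<in> W" "\<And>w. w \<in> W \<Longrightarrow> inner (y - q) w = 0"
      using proj_subspace[OF closedW subW] by blast
    have e1: "inner (xs j) y = inner (xs j) q" for j
      using q(2)[OF xsW[of j]] by (simp add: inner_diff_left inner_diff_right inner_commute[of "xs j"])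
    have e2: "inner p y = inner p q"
      using q(2)[OF p(1)] by (simp add: inner_diff_left inner_diff_right inner_commute[of p])
    have "(\<lambda>j. inner (xs j) q) \<longlonglongrightarrow> inner p q" using fW[OF q(1)] fo[OF q(1)] by simp
    then show "(\<lambda>k. inner ((X \<circ> r) k) y) \<longlonglongrightarrow> inner p y"
      using e1 e2 by (simp add: xs_def o_def)
  qed
  then show ?thesis using r by blast
qed



lemma bdd_inner_null:
  fixes x v :: "nat \<Rightarrow> 'a::real_inner"
  assumes "\<And>j. norm (x j) \<le> C" "v \<longlonglongrightarrow> 0"
  shows "(\<lambda>j. inner (x j) (v j)) \<longlonglongrightarrow> 0"
proof (rule Lim_null_comparison)
  show "\<forall>\<^sub>F j in sequentially. norm (inner (x j) (v j)) \<le> C * norm (v j)"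
  proof (rule always_eventually, rule allI)
    fix j
    have "norm (inner (x j) (v j)) \<le> norm (x j) * norm (v j)" using Cauchy_Schwarz_ineq2 by simp
    also have "\<dots> \<le> C * norm (v j)" using assms(1) by (intro mult_right_mono) auto
    finally show "norm (inner (x j) (v j)) \<le> C * norm (v j)" .
  qed
  have "(\<lambda>j. C * norm (v j)) \<longlonglongrightarrow> C * norm (0::'a)" by (intro tendsto_intros assms(2))
  then show "(\<lambda>j. C * norm (v j)) \<longlonglongrightarrow> 0" by simp
qed

lemma weak_sub:
  assumes "weakly_converges x p" "strict_mono s"
  shows "weakly_converges (x \<circ> s) p"
  unfolding weakly_converges_def
proof
  fix y
  have "(\<lambda>k. inner (x k) y) \<longlonglongrightarrow> inner p y" using assms(1) unfolding weakly_converges_def by blast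
  from LIMSEQ_subseq_LIMSEQ[OF this assms(2)] show "(\<lambda>k. inner ((x \<circ> s) k) y) \<longlonglongrightarrow> inner p y"
    by (simp add: o_def)
qed

lemma weak_inner:
  assumes "weakly_converges x p"
  shows "(\<lambda>j. inner (x j - c) y) \<longlonglongrightarrow> inner (p - c) y"
proof -
  have "(\<lambda>j. inner (x j) y) \<longlonglongrightarrow> inner p y" using assms by (simp add: weakly_converges_def)
  then have "(\<lambda>j. inner (x j) y - inner c y) \<longlonglongrightarrow> inner p y - inner c y"
    by (rule tendsto_diff) simp
  then show ?thesis by (simp add: inner_diff_left)
qed

lemma weak_inner':
  assumes "weakly_converges x p"
  shows "(\<lambda>j. inner y (x j)) \<longlonglongrightarrow> inner y p"
proof -
  have "(\<lambda>j. inner (x j) y) \<longlonglongrightarrow> inner p y" using assms by (simp add: weakly_converges_def)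
  then show ?thesis by (simp add: inner_commute[of y])
qed

lemma cluster_in_zeros:
  fixes A :: "'a::{real_inner,complete_space} \<Rightarrow> 'a set" and B :: "'a \<Rightarrow> 'a"
  assumes maxA: "maximally_monotone A" and monB: "monotone_fun B"
    and lip: "L-lipschitz_on UNIV B"
    and aA: "\<And>k. a k \<in> A (X k)" and u0: "(\<lambda>k. a k + B (X k)) \<longlonglongrightarrow> 0"
    and bndX: "\<And>k. norm (X k) \<le> K"
    and r: "strict_mono r" and wc: "weakly_converges (X \<circ> r) p"
  shows "p \<in> zeros_sum A B"
proof -
  have monA: "monotone_op A" using maxA unfolding maximally_monotone_def by blast
  have L0: "0 \<le> L" using lip lipschitz_on_nonneg by blast
  have Bl: "norm (B u - B v) \<le> L * norm (u - v)" for u v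
    using lipschitz_onD[OF lip, of u v] by (simp add: dist_norm)
  have bB: "norm (B (X (r j))) \<le> norm (B 0) + L * K" for j
  proof -
    have "norm (B (X (r j))) \<le> norm (B 0) + norm (B (X (r j)) - B 0)" by (metis norm_triangle_sub)
    also have "norm (B (X (r j)) - B 0) \<le> L * K" using Bl[of "X (r j)" 0] bndX[of "r j"] L0
      by (smt (verit) mult_left_mono diff_zero)
    finally show ?thesis by simp
  qed
  obtain s b where s: "strict_mono s" and wb: "weakly_converges ((\<lambda>j. B (X (r j))) \<circ> s) b"
    using weak_compact[of "\<lambda>j. B (X (r j))", OF bB] by blast
  define \<xi> where "\<xi> j = X (r (s j))" for j
  define \<alpha> where "\<alpha> j = a (r (s j))" for j
  define \<beta> where "\<beta> j = B (\<xi> j)" for j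
  define \<upsilon> where "\<upsilon> j = \<alpha> j + \<beta> j" for j
  have rs: "strict_mono (r \<circ> s)" using r s by (rule strict_mono_o)
  have \<upsilon>0: "\<upsilon> \<longlonglongrightarrow> 0" using LIMSEQ_subseq_LIMSEQ[OF u0 rs]
    unfolding \<upsilon>_def \<alpha>_def \<beta>_def \<xi>_def by (simp add: o_def)
  have w\<xi>: "weakly_converges \<xi> p" using weak_sub[OF wc s] unfolding \<xi>_def by (simp add: o_def)
  have w\<beta>: "weakly_converges \<beta> b" using wb unfolding \<beta>_def \<xi>_def by (simp add: o_def)
  have b\<xi>: "norm (\<xi> j - p) \<le> K + norm p" for j
    using bndX[of "r (s j)"] norm_triangle_ineq4[of "\<xi> j" p] unfolding \<xi>_def by linarith
  have T1: "(\<lambda>j. inner (\<xi> j - p) (\<upsilon> j)) \<longlonglongrightarrow> 0" using bdd_inner_null[OF b\<xi> \<upsilon>0] .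
  have \<alpha>A: "\<alpha> j \<in> A (\<xi> j)" for j unfolding \<alpha>_def \<xi>_def by (rule aA)
  have step1: "0 \<le> inner (p - y) (- b - v)" if v: "v \<in> A y" for y v
  proof -
    define R where "R j = inner (\<xi> j - p) (\<upsilon> j) - inner (\<xi> j - p) (B p - b) + inner (\<xi> j - p) (- b - v)
       + (inner (p - y) (\<upsilon> j) - inner (p - y) (\<beta> j) - inner (p - y) v)" for j
    have Rle: "0 \<le> R j" for j
    proof -
      have m1: "0 \<le> inner (\<xi> j - y) (\<alpha> j - v)" using monA \<alpha>A[of j] v unfolding monotone_op_def by blast
      have m2: "0 \<le> inner (\<xi> j - p) (\<beta> j - B p)" using monB unfolding monotone_fun_def \<beta>_def by blast
      have "inner (\<xi> j - y) (\<alpha> j - v) = R j - inner (\<xi> j - p) (\<beta> j - B p)"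
        unfolding R_def \<upsilon>_def by (simp add: inner_diff_left inner_diff_right inner_add_left inner_add_right)
      then show ?thesis using m1 m2 by linarith
    qed
    have "R \<longlonglongrightarrow> 0 - inner (p - p) (B p - b) + inner (p - p) (- b - v) + (inner (p - y) 0 - inner (p - y) b - inner (p - y) v)"
      unfolding R_def
      by (intro tendsto_intros T1 weak_inner[OF w\<xi>] weak_inner'[OF w\<beta>] tendsto_inner[OF tendsto_const \<upsilon>0])
    then have "R \<longlonglongrightarrow> inner (p - y) (- b - v)" by (simp add: inner_diff_right)
    then show ?thesis using Rle by (intro LIMSEQ_le_const) auto
  qed
  have bAp: "- b \<in> A p"
  proof -
    define A' where "A' z = (if z = p then insert (- b) (A p) else A z)" for z
    have "monotone_op A'" unfolding monotone_op_def
    proof (intro allI impI)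
      fix x y u v assume u: "u \<in> A' x" and v: "v \<in> A' y"
      have sym: "inner (x - p) (u - - b) = inner (p - x) (- b - u)"
        by (simp add: inner_diff_left inner_diff_right inner_add_left inner_add_right)
      consider "x = p" "u = - b" | "u \<in> A x" using u unfolding A'_def by (auto split: if_splits)
      then show "0 \<le> inner (x - y) (u - v)"
      proof cases
        case 1
        consider "y = p" "v = - b" | "v \<in> A y" using v unfolding A'_def by (auto split: if_splits)
        then show ?thesis
        proof cases
          case 1 then show ?thesis using \<open>x = p\<close> by simp
        next
          case 2 then show ?thesis using step1[OF 2] \<open>x = p\<close> \<open>u = - b\<close> by simp
        qed
      next
        case 2
        note ux = 2
        consider "y = p" "v = - b" | "v \<in> A y" using v unfolding A'_def by (auto split: if_splits)
        then show ?thesis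
        proof cases
          case 1 then show ?thesis using step1[OF ux] sym by simp
        next
          case 2
          then show ?thesis using monA ux unfolding monotone_op_def by blast
        qed
      qed
    qed
    moreover have "\<forall>z. A z \<subseteq> A' z" unfolding A'_def by auto
    ultimately have "A' = A" using maxA unfolding maximally_monotone_def by blast
    then show ?thesis by (metis A'_def insertI1)
  qed
  have step2: "0 \<le> inner (p - y) (b - B y)" for y
  proof -
    define R where "R j = inner (\<xi> j - p) (\<upsilon> j) + inner (\<xi> j - p) (b - B y) + (inner (p - y) (\<beta> j) - inner (p - y) (B y))" for j
    have Rle: "0 \<le> R j" for j
    proof -
      have m1: "0 \<le> inner (\<xi> j - p) (\<alpha> j - - b)" using monA \<alpha>A[of j] bAp unfolding monotone_op_def by blast
      have m2: "0 \<le> inner (\<xi> j - y) (\<beta> j - B y)" using monB unfolding monotone_fun_def \<beta>_def by blast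
      have "inner (\<xi> j - y) (\<beta> j - B y) = R j - inner (\<xi> j - p) (\<alpha> j - - b)"
        unfolding R_def \<upsilon>_def by (simp add: inner_diff_left inner_diff_right inner_add_left inner_add_right)
      then show ?thesis using m1 m2 by linarith
    qed
    have "R \<longlonglongrightarrow> 0 + inner (p - p) (b - B y) + (inner (p - y) b - inner (p - y) (B y))"
      unfolding R_def by (intro tendsto_intros T1 weak_inner[OF w\<xi>] weak_inner'[OF w\<beta>])
    then have "R \<longlonglongrightarrow> inner (p - y) (b - B y)" by (simp add: inner_diff_right)
    then show ?thesis using Rle by (intro LIMSEQ_le_const) auto
  qed
  have "b = B p"
  proof -
    define w where "w = B p - b"
    define t where "t = 1 / (2 * (L + 1))"
    have t: "0 < t" "t * L \<le> 1/2" unfolding t_def using L0 by (auto simp: field_simps)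
    have "0 \<le> inner (p - (p - t *\<^sub>R w)) (b - B (p - t *\<^sub>R w))" by (rule step2)
    then have "0 \<le> t * inner w (b - B (p - t *\<^sub>R w))" by simp
    then have i1: "0 \<le> inner w (b - B (p - t *\<^sub>R w))" using t(1) by (simp add: zero_le_mult_iff)
    have "inner w (B p - B (p - t *\<^sub>R w)) \<le> norm w * norm (B p - B (p - t *\<^sub>R w))"
      by (rule real_inner_class.Cauchy_Schwarz_ineq2[THEN abs_le_D1])
    also have "\<dots> \<le> norm w * (L * (t * norm w))"
      using Bl[of p "p - t *\<^sub>R w"] t(1) by (intro mult_left_mono) auto
    finally have i2: "inner w (B p - B (p - t *\<^sub>R w)) \<le> t * L * (norm w)^2"
      by (simp add: power2_eq_square algebra_simps)
    have "inner w (b - B p) = inner w (b - B (p - t *\<^sub>R w)) - inner w (B p - B (p - t *\<^sub>R w))"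
      by (simp add: inner_diff_right)
    moreover have "inner w (b - B p) + (norm w)^2 = 0" unfolding w_def
      by (simp add: power2_norm_eq_inner inner_diff_left inner_diff_right inner_commute)
    moreover have "(t * L) * (norm w)^2 \<le> (1/2) * (norm w)^2" using t(2) by (intro mult_right_mono) auto
    ultimately have "(norm w)^2 \<le> 0" using i1 i2 by linarith
    then show ?thesis unfolding w_def by simp
  qed
  then show ?thesis unfolding zeros_sum_def using bAp by force
qed



lemma two_mul_le: "2 * (x::real) * y \<le> x^2 + y^2"
  using power2_diff[of x y] zero_le_power2[of "x - y"] by linarith

lemma frb_lower:
  fixes v u z bv bu :: "'a::real_inner"
  assumes lip: "norm (bv - bu) \<le> L * norm (v - u)" and L0: "0 \<le> L" and lam: "0 < lam"
  shows "(1 - lam*L) * (norm (v - z))^2 \<le> (norm (v - z))^2 - 2*lam*inner (v - z) (bv - bu) + lam*L*(norm (v - u))^2"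
proof -
  have "inner (v - z) (bv - bu) \<le> norm (v - z) * norm (bv - bu)"
    by (rule real_inner_class.Cauchy_Schwarz_ineq2[THEN abs_le_D1])
  also have "\<dots> \<le> norm (v - z) * (L * norm (v - u))" using lip by (intro mult_left_mono) auto
  finally have i: "inner (v - z) (bv - bu) \<le> L * (norm (v - z) * norm (v - u))" by (simp add: algebra_simps)
  have "2 * (norm (v - z) * norm (v - u)) \<le> (norm (v - z))^2 + (norm (v - u))^2"
    using two_mul_le[of "norm (v - z)" "norm (v - u)"] by simp
  then have "lam * (L * (2 * (norm (v - z) * norm (v - u)))) \<le> lam * (L * ((norm (v - z))^2 + (norm (v - u))^2))"
    using lam L0 by (intro mult_left_mono) auto
  moreover have "2 * lam * inner (v - z) (bv - bu) \<le> 2 * lam * (L * (norm (v - z) * norm (v - u)))"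
    using i lam by (intro mult_left_mono) auto
  ultimately have "2 * lam * inner (v - z) (bv - bu) \<le> lam * L * ((norm (v - z))^2 + (norm (v - u))^2)"
    by (simp add: algebra_simps)
  then show ?thesis by (simp add: algebra_simps)
qed

lemma frb_step:
  fixes u v w z a bu bv bw bz :: "'a::real_inner"
  assumes lam: "0 < lam" and eq: "v - (2*lam) *\<^sub>R bv + lam *\<^sub>R bu = w + lam *\<^sub>R a"
    and m1: "0 \<le> inner (w - z) (a + bz)"
    and m2: "0 \<le> inner (w - z) (bw - bz)"
    and lip: "norm (bv - bu) \<le> L * norm (v - u)" and L0: "0 \<le> L"
  shows "(norm (w - z))^2 - 2*lam*inner (w - z) (bw - bv) + lam*L*(norm (w - v))^2 + (1 - 2*lam*L)*(norm (w - v))^2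
        \<le> (norm (v - z))^2 - 2*lam*inner (v - z) (bv - bu) + lam*L*(norm (v - u))^2"
proof -
  have la: "lam *\<^sub>R a = v - w - (2*lam) *\<^sub>R bv + lam *\<^sub>R bu" using eq by (simp add: algebra_simps)
  have "0 \<le> lam * inner (w - z) (a + bz)" using m1 lam by simp
  also have "\<dots> = inner (w - z) (lam *\<^sub>R a + lam *\<^sub>R bz)" by (simp add: inner_add_right algebra_simps)
  finally have S1: "0 \<le> inner (w - z) (v - w - (2*lam) *\<^sub>R bv + lam *\<^sub>R bu + lam *\<^sub>R bz)" unfolding la .
  have S2: "0 \<le> lam * inner (w - z) (bw - bz)" using m2 lam by simp
  have ident: "2 * inner (w - z) (v - w - (2*lam) *\<^sub>R bv + lam *\<^sub>R bu + lam *\<^sub>R bz) + 2 * (lam * inner (w - z) (bw - bz))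
     = (norm (v - z))^2 - (norm (w - z))^2 - (norm (w - v))^2 + 2*lam*inner (w - z) (bw - bv)
       - 2*lam*inner (v - z) (bv - bu) - 2*lam*inner (w - v) (bv - bu)"
    unfolding power2_norm_eq_inner
    by (simp add: inner_add_left inner_add_right inner_diff_left inner_diff_right inner_commute) (simp add: algebra_simps)
  have "- inner (w - v) (bv - bu) \<le> norm (w - v) * norm (bv - bu)"
    by (rule real_inner_class.Cauchy_Schwarz_ineq2[THEN abs_le_D2])
  also have "\<dots> \<le> norm (w - v) * (L * norm (v - u))" using lip by (intro mult_left_mono) auto
  finally have i: "- inner (w - v) (bv - bu) \<le> L * (norm (w - v) * norm (v - u))" by (simp add: algebra_simps)
  have "2 * (norm (w - v) * norm (v - u)) \<le> (norm (w - v))^2 + (norm (v - u))^2"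
    using two_mul_le[of "norm (w - v)" "norm (v - u)"] by simp
  then have "lam * (L * (2 * (norm (w - v) * norm (v - u)))) \<le> lam * (L * ((norm (w - v))^2 + (norm (v - u))^2))"
    using lam L0 by (intro mult_left_mono) auto
  moreover have "2 * lam * (- inner (w - v) (bv - bu)) \<le> 2 * lam * (L * (norm (w - v) * norm (v - u)))"
    using i lam by (intro mult_left_mono) auto
  ultimately have c: "- 2 * lam * inner (w - v) (bv - bu) \<le> lam * L * ((norm (w - v))^2 + (norm (v - u))^2)"
    by (simp add: algebra_simps)
  show ?thesis using S1 S2 ident c by (simp add: algebra_simps)
qed



lemma LIMSEQ_Suc_iff: "(\<lambda>n. f (Suc n)) \<longlonglongrightarrow> l \<longleftrightarrow> f \<longlonglongrightarrow> l"
  using LIMSEQ_Suc LIMSEQ_imp_Suc by blast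

lemma sq_le_bound: "(t::real)^2 \<le> C \<Longrightarrow> 0 \<le> t \<Longrightarrow> t \<le> max 1 C"
proof (cases "t \<le> 1")
  case True then show ?thesis by simp
next
  case False
  assume a: "t^2 \<le> C" "0 \<le> t"
  have "t * 1 \<le> t * t" using False a(2) by (intro mult_left_mono) auto
  then have "t \<le> C" using a(1) by (simp add: power2_eq_square)
  then show ?thesis by simp
qed

lemma not_tendsto_subseq:
  fixes f :: "nat \<Rightarrow> real"
  assumes "\<not> f \<longlonglongrightarrow> l"
  shows "\<exists>(r::nat\<Rightarrow>nat) e. strict_mono r \<and> 0 < e \<and> (\<forall>j. e \<le> \<bar>f (r j) - l\<bar>)"
proof -
  obtain e where e: "0 < e" "\<forall>N. \<exists>n\<ge>N. e \<le> \<bar>f n - l\<bar>"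
    using assms unfolding LIMSEQ_def dist_real_def by (meson not_less)
  then have inf: "infinite {n. e \<le> \<bar>f n - l\<bar>}" unfolding infinite_nat_iff_unbounded_le by simp
  obtain r :: "nat \<Rightarrow> nat" where r: "strict_mono r \<and> (\<forall>n. r n \<in> {n. e \<le> \<bar>f n - l\<bar>})"
    using infinite_enumerate[OF inf] by blast
  have "\<forall>j. e \<le> \<bar>f (r j) - l\<bar>" using r by simp
  then show ?thesis using e(1) r by (intro exI[of _ r] exI[of _ e]) simp
qed

theorem corollary2p6:
  fixes A :: "'a::{real_inner, complete_space} \<Rightarrow> 'a set"
    and B :: "'a \<Rightarrow> 'a"
    and L lam :: real
    and x :: "nat \<Rightarrow> 'a"
    and xm1 :: 'a
  assumes "maximally_monotone A"
    and "monotone_fun B"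
    and "L-lipschitz_on UNIV B"
    and "zeros_sum A B \<noteq> {}"
    and "0 < lam" and "2 * L * lam < 1"
    and "x 1 \<in> resolvent lam A (x 0 - (2 * lam) *\<^sub>R B (x 0) + lam *\<^sub>R B xm1)"
    and "\<forall>k. x (Suc (Suc k)) \<in>
           resolvent lam A (x (Suc k) - (2 * lam) *\<^sub>R B (x (Suc k)) + lam *\<^sub>R B (x k))"
  shows "\<exists>p \<in> zeros_sum A B. weakly_converges x p"
proof -
  note maxA = assms(1) and monB = assms(2) and lip = assms(3) and lam = assms(5) and lamL = assms(6)
  have monA: "monotone_op A" using maxA unfolding maximally_monotone_def by blast
  have L0: "0 \<le> L" using lip lipschitz_on_nonneg by blast
  have Bl: "norm (B u - B v) \<le> L * norm (u - v)" for u v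
    using lipschitz_onD[OF lip, of u v] by (simp add: dist_norm)
  define y where "y k = (if k = 0 then xm1 else x (k - 1))" for k
  have y0: "y 0 = xm1" and ySuc: "y (Suc k) = x k" for k by (simp_all add: y_def)
  have rec: "y (Suc (Suc k)) \<in> resolvent lam A (y (Suc k) - (2*lam) *\<^sub>R B (y (Suc k)) + lam *\<^sub>R B (y k))" for k
  proof (cases k)
    case 0 then show ?thesis using assms(7) by (simp add: y_def)
  next
    case (Suc k') then show ?thesis using assms(8) by (simp add: y_def)
  qed
  have "\<forall>k. \<exists>c. c \<in> A (y (Suc (Suc k))) \<and>
      y (Suc k) - (2*lam) *\<^sub>R B (y (Suc k)) + lam *\<^sub>R B (y k) = y (Suc (Suc k)) + lam *\<^sub>R c"
    using rec unfolding resolvent_def by blast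
  then have "\<exists>a. \<forall>k. a k \<in> A (y (Suc (Suc k))) \<and>
      y (Suc k) - (2*lam) *\<^sub>R B (y (Suc k)) + lam *\<^sub>R B (y k) = y (Suc (Suc k)) + lam *\<^sub>R a k"
    by (rule choice)
  then obtain a where aA: "\<And>k. a k \<in> A (y (Suc (Suc k)))"
    and aeq: "\<And>k. y (Suc k) - (2*lam) *\<^sub>R B (y (Suc k)) + lam *\<^sub>R B (y k) = y (Suc (Suc k)) + lam *\<^sub>R a k"
    by blast
  define D where "D k = norm (y (Suc k) - y k)" for k
  have energy: "(\<exists>C. \<forall>n. norm (y n) \<le> C) \<and> D \<longlonglongrightarrow> 0 \<and> convergent (\<lambda>n. (norm (y n - z))^2)"
    if z: "z \<in> zeros_sum A B" for z
  proof -
    obtain a0 where a0: "a0 \<in> A z" "a0 + B z = 0" using z unfolding zeros_sum_def by blast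
    define E where "E k = (norm (y (Suc k) - z))^2 - 2*lam*inner (y (Suc k) - z) (B (y (Suc k)) - B (y k))
        + lam*L*(norm (y (Suc k) - y k))^2" for k
    have step: "E (Suc k) + (1 - 2*lam*L) * (D (Suc k))^2 \<le> E k" for k
    proof -
      have m1: "0 \<le> inner (y (Suc (Suc k)) - z) (a k + B z)"
      proof -
        have "a k + B z = a k - a0" using a0(2) by (simp add: eq_neg_iff_add_eq_0[symmetric] algebra_simps)
        then show ?thesis using monA aA[of k] a0(1) unfolding monotone_op_def by auto
      qed
      have m2: "0 \<le> inner (y (Suc (Suc k)) - z) (B (y (Suc (Suc k))) - B z)"
        using monB unfolding monotone_fun_def by blast
      show ?thesis unfolding E_def D_def
        using frb_step[OF lam aeq[of k] m1 m2 Bl[of "y (Suc k)" "y k"] L0] by simp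
    qed
    have c1: "0 < 1 - lam * L" "0 \<le> 1 - 2*lam*L" using lamL lam L0 by (auto simp: algebra_simps)
    have Elow: "(1 - lam*L) * (norm (y (Suc k) - z))^2 \<le> E k" for k
      unfolding E_def by (rule frb_lower[OF Bl L0 lam])
    have E0: "0 \<le> E k" for k
      using Elow[of k] mult_nonneg_nonneg[OF less_imp_le[OF c1(1)] zero_le_power2[of "norm (y (Suc k) - z)"]] by linarith
    have Edec: "E (Suc k) \<le> E k" for k
      using step[of k] mult_nonneg_nonneg[OF c1(2) zero_le_power2[of "D (Suc k)"]] by linarith
    have "decseq E" using Edec by (simp add: decseq_SucI)
    then obtain El where El: "E \<longlonglongrightarrow> El" using decseq_convergent[of E 0] E0 by blast
    have "(\<lambda>k. E k - E (Suc k)) \<longlonglongrightarrow> El - El"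
      using El by (intro tendsto_intros) (auto simp: LIMSEQ_Suc_iff)
    then have dE: "(\<lambda>k. E k - E (Suc k)) \<longlonglongrightarrow> 0" by simp
    have "(\<lambda>k. (D (Suc k))^2) \<longlonglongrightarrow> 0"
    proof (rule Lim_null_comparison)
      show "\<forall>\<^sub>F k in sequentially. norm ((D (Suc k))^2) \<le> (E k - E (Suc k)) / (1 - 2*lam*L)"
      proof (rule always_eventually, rule allI)
        fix k
        have pos: "0 < 1 - 2*lam*L" using lamL by (simp add: algebra_simps)
        have "(1 - 2*lam*L) * (D (Suc k))^2 \<le> E k - E (Suc k)" using step[of k] by simp
        then show "norm ((D (Suc k))^2) \<le> (E k - E (Suc k)) / (1 - 2*lam*L)"
          using pos by (simp add: field_simps)
      qed
      have "(\<lambda>k. (E k - E (Suc k)) / (1 - 2*lam*L)) \<longlonglongrightarrow> 0 / (1 - 2*lam*L)"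
        by (intro tendsto_intros dE) (use lamL in \<open>auto simp: algebra_simps\<close>)
      then show "(\<lambda>k. (E k - E (Suc k)) / (1 - 2*lam*L)) \<longlonglongrightarrow> 0" by simp
    qed
    then have "(\<lambda>k. sqrt ((D (Suc k))^2)) \<longlonglongrightarrow> sqrt 0" by (intro tendsto_intros)
    then have "(\<lambda>k. D (Suc k)) \<longlonglongrightarrow> 0" by (simp add: D_def)
    then have D0: "D \<longlonglongrightarrow> 0" by (simp add: LIMSEQ_Suc_iff)
    define C0 where "C0 = E 0 / (1 - lam * L)"
    have yz: "norm (y (Suc k) - z) \<le> max 1 C0" for k
    proof (rule sq_le_bound)
      have "E k \<le> E 0" using \<open>decseq E\<close> by (simp add: decseq_def)
      then have "(1 - lam*L) * (norm (y (Suc k) - z))^2 \<le> E 0" using Elow[of k] by linarith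
      then show "(norm (y (Suc k) - z))^2 \<le> C0" unfolding C0_def using c1(1) by (simp add: field_simps)
    qed simp
    have bnd: "\<exists>C. \<forall>n. norm (y n) \<le> C"
    proof (intro exI allI)
      fix n
      show "norm (y n) \<le> max (norm xm1) (max 1 C0 + norm z)"
      proof (cases n)
        case 0 then show ?thesis by (simp add: y0)
      next
        case (Suc k)
        have "norm (y (Suc k)) \<le> norm (y (Suc k) - z) + norm z" using norm_triangle_sub[of "y (Suc k)" z] by simp
        then show ?thesis using yz[of k] Suc by simp
      qed
    qed
    have Bd0: "(\<lambda>k. B (y (Suc k)) - B (y k)) \<longlonglongrightarrow> 0"
    proof (rule Lim_null_comparison)
      show "\<forall>\<^sub>F k in sequentially. norm (B (y (Suc k)) - B (y k)) \<le> L * D k"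
        unfolding D_def using Bl by (intro always_eventually) auto
      have "(\<lambda>k. L * D k) \<longlonglongrightarrow> L * 0" by (intro tendsto_intros D0)
      then show "(\<lambda>k. L * D k) \<longlonglongrightarrow> 0" by simp
    qed
    have G: "(\<lambda>k. - 2*lam*inner (y (Suc k) - z) (B (y (Suc k)) - B (y k)) + lam*L*(D k)^2) \<longlonglongrightarrow> - 2*lam*0 + lam*L*0^2"
      by (intro tendsto_intros bdd_inner_null[OF yz Bd0] D0)
    have "(\<lambda>k. E k - (- 2*lam*inner (y (Suc k) - z) (B (y (Suc k)) - B (y k)) + lam*L*(D k)^2)) \<longlonglongrightarrow> El - (- 2*lam*0 + lam*L*0^2)"
      by (intro tendsto_intros El G)
    then have "(\<lambda>k. (norm (y (Suc k) - z))^2) \<longlonglongrightarrow> El" by (simp add: E_def D_def)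
    then have "convergent (\<lambda>n. (norm (y n - z))^2)"
      by (auto simp: convergent_def LIMSEQ_Suc_iff[where f = "\<lambda>n. (norm (y n - z))^2"])
    then show ?thesis using bnd D0 by blast
  qed
  obtain z0 where z0: "z0 \<in> zeros_sum A B" using assms(4) by blast
  obtain C where C: "\<And>n. norm (y n) \<le> C" and D0: "D \<longlonglongrightarrow> 0" using energy[OF z0] by blast
  define X where "X k = y (Suc (Suc k))" for k
  have u0: "(\<lambda>k. a k + B (X k)) \<longlonglongrightarrow> 0"
  proof (rule Lim_null_comparison)
    show "\<forall>\<^sub>F k in sequentially. norm (a k + B (X k)) \<le> (D (Suc k) + lam * (L * D (Suc k)) + lam * (L * D k)) / lam"
    proof (rule always_eventually, rule allI)
      fix k
      have la: "lam *\<^sub>R a k = y (Suc k) - (2*lam) *\<^sub>R B (y (Suc k)) + lam *\<^sub>R B (y k) - y (Suc (Suc k))"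
        using aeq[of k] by (simp add: algebra_simps)
      have two: "(2*lam) *\<^sub>R B (y (Suc k)) = lam *\<^sub>R B (y (Suc k)) + lam *\<^sub>R B (y (Suc k))"
        by (simp add: scaleR_left_distrib[symmetric])
      have eqv: "lam *\<^sub>R (a k + B (X k)) = (y (Suc k) - y (Suc (Suc k))) + lam *\<^sub>R (B (y (Suc (Suc k))) - B (y (Suc k)))
           - lam *\<^sub>R (B (y (Suc k)) - B (y k))"
        unfolding scaleR_add_right la two X_def by (simp add: algebra_simps)
      have "norm (lam *\<^sub>R (a k + B (X k))) \<le> norm (y (Suc k) - y (Suc (Suc k))) + norm (lam *\<^sub>R (B (y (Suc (Suc k))) - B (y (Suc k))))
           + norm (lam *\<^sub>R (B (y (Suc k)) - B (y k)))"
        using norm_triangle_ineq4[of "(y (Suc k) - y (Suc (Suc k))) + lam *\<^sub>R (B (y (Suc (Suc k))) - B (y (Suc k)))"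
                "lam *\<^sub>R (B (y (Suc k)) - B (y k))"]
              norm_triangle_ineq[of "y (Suc k) - y (Suc (Suc k))" "lam *\<^sub>R (B (y (Suc (Suc k))) - B (y (Suc k)))"]
        unfolding eqv by linarith
      then have "lam * norm (a k + B (X k)) \<le> norm (y (Suc k) - y (Suc (Suc k))) + lam * norm (B (y (Suc (Suc k))) - B (y (Suc k)))
           + lam * norm (B (y (Suc k)) - B (y k))"
        using lam by simp
      moreover have "norm (y (Suc k) - y (Suc (Suc k))) = D (Suc k)" unfolding D_def by (simp add: norm_minus_commute)
      moreover have "lam * norm (B (y (Suc (Suc k))) - B (y (Suc k))) \<le> lam * (L * D (Suc k))"
        unfolding D_def using lam Bl by (intro mult_left_mono) auto
      moreover have "lam * norm (B (y (Suc k)) - B (y k)) \<le> lam * (L * D k)"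
        unfolding D_def using lam Bl by (intro mult_left_mono) auto
      ultimately have "lam * norm (a k + B (X k)) \<le> D (Suc k) + lam * (L * D (Suc k)) + lam * (L * D k)" by linarith
      then show "norm (a k + B (X k)) \<le> (D (Suc k) + lam * (L * D (Suc k)) + lam * (L * D k)) / lam"
        using lam by (simp add: field_simps)
    qed
    have D1: "(\<lambda>k. D (Suc k)) \<longlonglongrightarrow> 0" using D0 by (simp add: LIMSEQ_Suc_iff)
    have "(\<lambda>k. (D (Suc k) + lam * (L * D (Suc k)) + lam * (L * D k)) / lam) \<longlonglongrightarrow> (0 + lam * (L * 0) + lam * (L * 0)) / lam"
      by (intro tendsto_intros D0 D1) (use lam in simp)
    then show "(\<lambda>k. (D (Suc k) + lam * (L * D (Suc k)) + lam * (L * D k)) / lam) \<longlonglongrightarrow> 0" by simp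
  qed
  have cl: "q \<in> zeros_sum A B" if r: "strict_mono r" and wq: "weakly_converges (y \<circ> r) q" for r q
  proof -
    define r' where "r' j = r (j + 2) - 2" for j
    have rge: "j \<le> r j" for j using seq_suble[OF r] .
    have r'e: "X (r' j) = y (r (j + 2))" for j
    proof -
      have "Suc (Suc (r (j + 2) - 2)) = r (j + 2)" using rge[of "j+2"] by linarith
      then show ?thesis unfolding X_def r'_def by simp
    qed
    have "strict_mono r'" unfolding strict_mono_Suc_iff r'_def
    proof
      fix j
      have "r (j + 2) < r (Suc j + 2)" using r by (simp add: strict_mono_def)
      then show "r (j + 2) - 2 < r (Suc j + 2) - 2" using rge[of "j+2"] by linarith
    qed
    moreover have "weakly_converges (X \<circ> r') q" unfolding weakly_converges_def
    proof
      fix v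
      have "(\<lambda>j. inner (y (r j)) v) \<longlonglongrightarrow> inner q v" using wq unfolding weakly_converges_def by (simp add: o_def)
      from LIMSEQ_ignore_initial_segment[OF this, of 2]
      show "(\<lambda>j. inner ((X \<circ> r') j) v) \<longlonglongrightarrow> inner q v" by (simp add: r'e o_def)
    qed
    moreover have "norm (X k) \<le> C" for k unfolding X_def by (rule C)
    ultimately show ?thesis
      using cluster_in_zeros[OF maxA monB lip, of a X, OF _ u0] aA unfolding X_def by blast
  qed
  obtain r p where r: "strict_mono r" and wp: "weakly_converges (y \<circ> r) p"
    using weak_compact[of y C, OF C] by blast
  have pS: "p \<in> zeros_sum A B" using cl[OF r wp] .
  have wy: "weakly_converges y p" unfolding weakly_converges_def
  proof (rule allI, rule ccontr)
    fix v assume nc: "\<not> (\<lambda>k. inner (y k) v) \<longlonglongrightarrow> inner p v"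
    obtain r2 :: "nat \<Rightarrow> nat" and e where r2: "strict_mono r2" and e: "0 < e" and far: "\<And>j. e \<le> \<bar>inner (y (r2 j)) v - inner p v\<bar>"
      using not_tendsto_subseq[OF nc] by blast
    obtain s q where s: "strict_mono s" and wq: "weakly_converges ((y \<circ> r2) \<circ> s) q"
      using weak_compact[of "y \<circ> r2" C] C by auto
    have rs: "strict_mono (r2 \<circ> s)" using r2 s by (rule strict_mono_o)
    have qS: "q \<in> zeros_sum A B" using cl[OF rs] wq by (simp add: o_assoc)
    have "(\<lambda>j. \<bar>inner (y (r2 (s j))) v - inner p v\<bar>) \<longlonglongrightarrow> \<bar>inner q v - inner p v\<bar>"
    proof -
      have "(\<lambda>j. inner (y (r2 (s j))) v) \<longlonglongrightarrow> inner q v"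
        using wq unfolding weakly_converges_def by (simp add: o_def)
      then show ?thesis by (intro tendsto_rabs tendsto_diff tendsto_const)
    qed
    then have "e \<le> \<bar>inner q v - inner p v\<bar>" using far by (intro LIMSEQ_le_const) auto
    then have qp: "q \<noteq> p" using e by auto
    (* Opial *)
    obtain lp where lp: "(\<lambda>n. (norm (y n - p))^2) \<longlonglongrightarrow> lp" using energy[OF pS] by (auto simp: convergent_def)
    obtain lq where lq: "(\<lambda>n. (norm (y n - q))^2) \<longlonglongrightarrow> lq" using energy[OF qS] by (auto simp: convergent_def)
    have ceq: "inner (y n) (p - q) = ((norm p)^2 - (norm q)^2 - (norm (y n - p))^2 + (norm (y n - q))^2) / 2" for n
      unfolding power2_norm_eq_inner
      by (simp add: inner_diff_left inner_diff_right inner_commute)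
    define l where "l = ((norm p)^2 - (norm q)^2 - lp + lq) / 2"
    have cl_: "(\<lambda>n. inner (y n) (p - q)) \<longlonglongrightarrow> l" unfolding ceq l_def by (intro tendsto_intros lp lq) simp
    have "(\<lambda>j. inner (y (r j)) (p - q)) \<longlonglongrightarrow> l" using LIMSEQ_subseq_LIMSEQ[OF cl_ r] by (simp add: o_def)
    moreover have "(\<lambda>j. inner (y (r j)) (p - q)) \<longlonglongrightarrow> inner p (p - q)"
      using wp unfolding weakly_converges_def by (simp add: o_def)
    ultimately have l1: "l = inner p (p - q)" using LIMSEQ_unique by blast
    have "(\<lambda>j. inner (y (r2 (s j))) (p - q)) \<longlonglongrightarrow> l" using LIMSEQ_subseq_LIMSEQ[OF cl_ rs] by (simp add: o_def)
    moreover have "(\<lambda>j. inner (y (r2 (s j))) (p - q)) \<longlonglongrightarrow> inner q (p - q)"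
      using wq unfolding weakly_converges_def by (simp add: o_def)
    ultimately have l2: "l = inner q (p - q)" using LIMSEQ_unique by blast
    have "inner (p - q) (p - q) = 0" using l1 l2 by (simp add: inner_diff_left)
    then show False using qp by simp
  qed
  have "weakly_converges x p" unfolding weakly_converges_def
  proof
    fix v
    have "(\<lambda>k. inner (y k) v) \<longlonglongrightarrow> inner p v" using wy unfolding weakly_converges_def by blast
    from LIMSEQ_ignore_initial_segment[OF this, of 1] show "(\<lambda>k. inner (x k) v) \<longlonglongrightarrow> inner p v"
      by (simp add: y_def)
  qed
  then show ?thesis using pS by blast
qed

end
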